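(* Let $T$ be an MFQST with degree bound $\phi\ge3$. Then every Steiner point $s$ of $T$ satisfies $\phi\le\deg s\le 2\phi-3$.
   Context: Let $Z=\{z_1,\dots,z_n\}\subset\mathbb{R}^2$ ($n\ge 1$) be a set of sources and $z_{BS}\in\mathbb{R}^2\setminus Z$ a sink; each source has supply $1$. A flow-dependent quadratic Steiner tree (FQST) consists of a finite set $S\subset\mathbb{R}^2$ of Steiner points and a tree $T$ with vertex set $Z\cup S\cup\{z_{BS}\}$ whose edges are directed towards $z_{BS}$. Every node other than the sink has exactly one out-edge, and the sink has none. Each edge $e$ carries a positive flow $f(e)$ such that: - at each source, the flow on its out-edge minus the total flow on its in-edges equals $1$; - at each Steiner point, the out-flow equals the total in-flow; - the sink receives total flow $n$. The cost is $L(T)=\sum_{e\in E(T)} f(e)|e|^2$. An MFQST with degree bound $\phi$ is an FQST minimising $L$ among all FQSTs (any finite $S$, any topology) in which every Steiner point has degree at least $\phi$. *)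

theory Defs
  imports "HOL-Analysis.Analysis"
begin

type_synonym pt = "real^2"

text \<open>An FQST for sources Z and sink zb: Steiner point set S, tree given by the
parent map p (the unique out-edge of v \<in> Z \<union> S is (v, p v)), and flow f v on the
out-edge of v.\<close>

definition in_nodes :: "pt set \<Rightarrow> pt set \<Rightarrow> (pt \<Rightarrow> pt) \<Rightarrow> pt \<Rightarrow> pt set" where
  "in_nodes Z S p x = {u \<in> Z \<union> S. p u = x}"

definition is_fqst :: "pt set \<Rightarrow> pt \<Rightarrow> pt set \<Rightarrow> (pt \<Rightarrow> pt) \<Rightarrow> (pt \<Rightarrow> real) \<Rightarrow> bool" where
  "is_fqst Z zb S p f \<longleftrightarrow>
     finite Z \<and> Z \<noteq> {} \<and> zb \<notin> Z \<and> finite S \<and> S \<inter> Z = {} \<and> zb \<notin> S \<and>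
     (\<forall>v \<in> Z \<union> S. p v \<in> Z \<union> S \<union> {zb} \<and> f v > 0) \<and>
     (\<forall>v \<in> Z \<union> S. \<exists>k. (p ^^ k) v = zb) \<and>
     (\<forall>z \<in> Z. f z - (\<Sum>u \<in> in_nodes Z S p z. f u) = 1) \<and>
     (\<forall>s \<in> S. f s = (\<Sum>u \<in> in_nodes Z S p s. f u)) \<and>
     (\<Sum>u \<in> in_nodes Z S p zb. f u) = real (card Z)"

text \<open>Degree of a Steiner point: in-edges plus its single out-edge.\<close>
definition steiner_deg :: "pt set \<Rightarrow> pt set \<Rightarrow> (pt \<Rightarrow> pt) \<Rightarrow> pt \<Rightarrow> nat" where
  "steiner_deg Z S p s = card (in_nodes Z S p s) + 1"

definition fqst_cost :: "pt set \<Rightarrow> pt set \<Rightarrow> (pt \<Rightarrow> pt) \<Rightarrow> (pt \<Rightarrow> real) \<Rightarrow> real" where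
  "fqst_cost Z S p f = (\<Sum>v \<in> Z \<union> S. f v * (norm (v - p v))\<^sup>2)"

definition fqst_deg_bound :: "pt set \<Rightarrow> pt \<Rightarrow> nat \<Rightarrow> pt set \<Rightarrow> (pt \<Rightarrow> pt) \<Rightarrow> (pt \<Rightarrow> real) \<Rightarrow> bool" where
  "fqst_deg_bound Z zb \<phi> S p f \<longleftrightarrow> is_fqst Z zb S p f \<and> (\<forall>s \<in> S. steiner_deg Z S p s \<ge> \<phi>)"

definition is_mfqst :: "pt set \<Rightarrow> pt \<Rightarrow> nat \<Rightarrow> pt set \<Rightarrow> (pt \<Rightarrow> pt) \<Rightarrow> (pt \<Rightarrow> real) \<Rightarrow> bool" where
  "is_mfqst Z zb \<phi> S p f \<longleftrightarrow> fqst_deg_bound Z zb \<phi> S p f \<and>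
     (\<forall>S' p' f'. fqst_deg_bound Z zb \<phi> S' p' f' \<longrightarrow> fqst_cost Z S p f \<le> fqst_cost Z S' p' f')"

end

theory Submission
  imports Defs
begin

lemma exists_C:
  fixes h :: "'a \<Rightarrow> 'b::real_vector"
  assumes "finite I" "card I \<ge> \<phi>" "\<phi> \<ge> 3" "\<forall>u\<in>I. h u \<noteq> 0"
  shows "\<exists>C\<subseteq>I. card C = \<phi> - 1 \<and> sum h C \<noteq> 0"
proof (rule ccontr)
  assume H: "\<not> ?thesis"
  obtain D where D: "D \<subseteq> I" "card D = \<phi>"
    using obtain_subset_with_card_n[OF assms(2)] by blast
  have fD: "finite D" using D assms(1) finite_subset by blast
  have eq: "h u = sum h D" if "u \<in> D" for u
  proof -
    have "sum h (D - {u}) = 0"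
      using H D that fD by (metis Diff_subset card_Diff_singleton dual_order.trans)
    moreover have "sum h D = h u + sum h (D - {u})" using sum.remove[OF fD that] .
    ultimately show ?thesis by simp
  qed
  have "sum h D = sum (\<lambda>_. sum h D) D" using eq by (rule sum.cong[OF refl])
  also have "\<dots> = real \<phi> *\<^sub>R sum h D" using D by (simp add: sum_constant_scaleR)
  finally have "(real \<phi> - 1) *\<^sub>R sum h D = 0" by (simp add: algebra_simps)
  moreover have "real \<phi> - 1 \<noteq> 0" using assms(3) by simp
  ultimately have "sum h D = 0" by simp
  moreover obtain u where "u \<in> D" using D assms(3) by (metis card.empty ex_in_conv not_numeral_le_zero)
  ultimately show False using eq[OF \<open>u \<in> D\<close>] D assms(4) \<open>u \<in> D\<close> by auto
qed

lemma funpow_fix: "p x = x \<Longrightarrow> (p ^^ k) x = x"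
  by (induction k) auto

lemma reach:
  assumes "\<forall>v\<in>A. p v \<in> A \<union> {zb}" "\<forall>v\<in>A. v\<notin>C \<longrightarrow> p' v = p v"
    "\<forall>v\<in>C. p' v = s' \<and> p' s' = p v" "C \<subseteq> A"
  shows "(p ^^ k) v = zb \<Longrightarrow> v \<in> A \<union> {zb} \<Longrightarrow> \<exists>k'. (p' ^^ k') v = zb"
proof (induction k arbitrary: v)
  case 0 then show ?case by (metis funpow_0)
next
  case (Suc k)
  show ?case
  proof (cases "v = zb")
    case True then show ?thesis by (metis funpow_0)
  next
    case False
    then have vA: "v \<in> A" using Suc by auto
    have "(p ^^ k) (p v) = zb" using Suc(2) by (simp add: funpow_Suc_right del: funpow.simps)
    then obtain k' where k': "(p' ^^ k') (p v) = zb" using Suc.IH assms(1) vA by blast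
    show ?thesis
    proof (cases "v \<in> C")
      case True
      then have "(p' ^^ (Suc (Suc k'))) v = zb" using assms(3) k'
        by (simp add: funpow_Suc_right del: funpow.simps)
      then show ?thesis by blast
    next
      case False
      then have "(p' ^^ (Suc k')) v = zb" using assms(2) vA k'
        by (simp add: funpow_Suc_right del: funpow.simps)
      then show ?thesis by blast
    qed
  qed
qed

lemma norm_shift:
  fixes v s g :: pt
  shows "f * (norm (v - (s - t *\<^sub>R g)))\<^sup>2 =
    f * (norm (v - s))\<^sup>2 - 2 * t * ((f *\<^sub>R (s - v)) \<bullet> g) + t\<^sup>2 * f * (g \<bullet> g)"
proof -
  have "v - (s - t *\<^sub>R g) = (v - s) + t *\<^sub>R g" by (simp add: algebra_simps)
  then have "(norm (v - (s - t *\<^sub>R g)))\<^sup>2 = ((v - s) + t *\<^sub>R g) \<bullet> ((v - s) + t *\<^sub>R g)"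
    by (simp only: power2_norm_eq_inner)
  also have "\<dots> = (v - s) \<bullet> (v - s) + 2 * t * ((v - s) \<bullet> g) + t\<^sup>2 * (g \<bullet> g)"
    by (simp add: inner_add_left inner_add_right inner_commute power2_eq_square algebra_simps)
  also have "(v - s) \<bullet> (v - s) = (norm (v - s))\<^sup>2" by (simp only: power2_norm_eq_inner)
  finally have eqN: "(norm (v - (s - t *\<^sub>R g)))\<^sup>2 = (norm (v - s))\<^sup>2 + 2 * t * ((v - s) \<bullet> g) + t\<^sup>2 * (g \<bullet> g)" .
  have eqI: "(f *\<^sub>R (s - v)) \<bullet> g = - f * ((v - s) \<bullet> g)"
    by (simp add: inner_diff_left algebra_simps)
  show ?thesis unfolding eqN eqI by (simp add: algebra_simps)
qed

theorem mainTheorem7: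
  fixes Z :: "pt set" and zb :: pt and \<phi> :: nat and S :: "pt set"
    and p :: "pt \<Rightarrow> pt" and f :: "pt \<Rightarrow> real" and s :: pt
  assumes "is_mfqst Z zb \<phi> S p f" and "\<phi> \<ge> 3" and "s \<in> S"
  shows "\<phi> \<le> steiner_deg Z S p s \<and> steiner_deg Z S p s \<le> 2 * \<phi> - 3"
proof -
  have db: "fqst_deg_bound Z zb \<phi> S p f" and
    minc: "\<And>S' p' f'. fqst_deg_bound Z zb \<phi> S' p' f' \<Longrightarrow> fqst_cost Z S p f \<le> fqst_cost Z S' p' f'"
    using assms(1) unfolding is_mfqst_def by auto
  have fq: "is_fqst Z zb S p f" and degS: "\<forall>x\<in>S. steiner_deg Z S p x \<ge> \<phi>"
    using db unfolding fqst_deg_bound_def by auto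
  note F = fq[unfolded is_fqst_def]
  have finZ: "finite Z" and finS: "finite S" and SZ: "S \<inter> Z = {}" and zbZ: "zb \<notin> Z" and zbS: "zb \<notin> S"
    and Zne: "Z \<noteq> {}"
    and pA: "\<forall>v\<in>Z \<union> S. p v \<in> Z \<union> S \<union> {zb}" and fpos: "\<forall>v\<in>Z \<union> S. f v > 0"
    and reachp: "\<forall>v\<in>Z \<union> S. \<exists>k. (p ^^ k) v = zb"
    and fZ: "\<forall>z\<in>Z. f z - (\<Sum>u \<in> in_nodes Z S p z. f u) = 1"
    and fS: "\<forall>x\<in>S. f x = (\<Sum>u \<in> in_nodes Z S p x. f u)"
    and fzb: "(\<Sum>u \<in> in_nodes Z S p zb. f u) = real (card Z)"
    using F by auto
  have lower: "\<phi> \<le> steiner_deg Z S p s" using degS assms(3) by auto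
  moreover have "steiner_deg Z S p s \<le> 2 * \<phi> - 3"
  proof (rule ccontr)
    assume nle: "\<not> ?thesis"
    define I where "I = in_nodes Z S p s"
    have cardI: "card I \<ge> 2 * \<phi> - 3" using nle unfolding steiner_deg_def I_def by linarith
    have IA: "I \<subseteq> Z \<union> S" unfolding I_def in_nodes_def by auto
    have finI: "finite I" using IA finZ finS finite_subset by blast
    have pI: "\<And>u. u \<in> I \<Longrightarrow> p u = s" unfolding I_def in_nodes_def by auto
    have sI: "s \<notin> I"
    proof
      assume "s \<in> I"
      then have "p s = s" by (rule pI)
      moreover obtain k where "(p ^^ k) s = zb" using reachp assms(3) by blast
      ultimately show False using funpow_fix[of p s k] zbS assms(3) by auto
    qed
    define h where "h u = f u *\<^sub>R (s - u)" for u
    have hnz: "\<forall>u\<in>I. h u \<noteq> 0"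
    proof
      fix u assume "u \<in> I"
      then have "u \<noteq> s" "f u > 0" using sI IA fpos by auto
      then show "h u \<noteq> 0" unfolding h_def by simp
    qed
    have "card I \<ge> \<phi>" using cardI assms(2) by linarith
    then obtain C where C: "C \<subseteq> I" "card C = \<phi> - 1" "sum h C \<noteq> 0"
      using exists_C[OF finI _ assms(2) hnz] by blast
    define g where "g = sum h C"
    have gnz: "g \<noteq> 0" using C g_def by simp
    have pC: "\<And>u. u \<in> C \<Longrightarrow> p u = s" using pI C by auto
    have finC: "finite C" using C finI finite_subset by blast
    have CA: "C \<subseteq> Z \<union> S" using C IA by auto
    have Cne: "C \<noteq> {}" using C assms(2) by auto
    define FF where "FF = sum f C"
    have FFpos: "FF > 0" unfolding FF_def
      using sum_pos[OF finC Cne] fpos CA by auto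
    define B where "B = Z \<union> S \<union> {zb}"
    have finB: "finite B" using finZ finS B_def by simp
    have injl: "inj (\<lambda>t::real. s - t *\<^sub>R g)"
      by (rule injI) (use gnz in simp)
    have finT: "finite ((\<lambda>t::real. s - t *\<^sub>R g) -` B)"
      by (rule finite_vimageI[OF finB injl])
    have "infinite ({0<..<1/FF} - (\<lambda>t::real. s - t *\<^sub>R g) -` B)"
      by (rule Diff_infinite_finite[OF finT]) (use FFpos in simp)
    then obtain t where "t \<in> {0<..<1/FF} - (\<lambda>t::real. s - t *\<^sub>R g) -` B"
      using infinite_imp_nonempty by blast
    then have t: "t \<in> {0<..<1/FF}" "s - t *\<^sub>R g \<notin> B" by auto
    define s' where "s' = s - t *\<^sub>R g"
    have s'B: "s' \<notin> Z" "s' \<notin> S" "s' \<noteq> zb" using t s'_def B_def by auto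
    have s'C: "s' \<notin> C" using s'B CA by auto
    have sC: "s \<notin> C" using sI C by auto
    have t0: "t > 0" and tF: "t * FF < 1" using t FFpos by (auto simp: field_simps)
    define S' where "S' = insert s' S"
    define p' where "p' x = (if x \<in> C then s' else if x = s' then s else p x)" for x
    define f' where "f' = f(s' := FF)"
    have p's': "p' s' = s" using s'C p'_def by simp
    have p'C: "\<And>u. u \<in> C \<Longrightarrow> p' u = s'" using p'_def by simp
    have p'o: "\<And>u. u \<in> Z \<union> S \<Longrightarrow> u \<notin> C \<Longrightarrow> p' u = p u" using p'_def s'B by auto
    have f'o: "\<And>u. u \<noteq> s' \<Longrightarrow> f' u = f u" using f'_def by simp
    have ZS': "Z \<union> S' = insert s' (Z \<union> S)" using S'_def by auto
    have in_other: "in_nodes Z S' p' x = in_nodes Z S p x" if "x \<noteq> s" "x \<noteq> s'" "x \<in> Z \<union> S \<union> {zb}" for x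
    proof -
      have "u \<in> in_nodes Z S' p' x \<longleftrightarrow> u \<in> in_nodes Z S p x" for u
      proof (cases "u = s'")
        case True
        then show ?thesis using p's' that s'B unfolding in_nodes_def S'_def by auto
      next
        case False
        show ?thesis
        proof (cases "u \<in> C")
          case True
          then show ?thesis using p'C pI C that CA unfolding in_nodes_def S'_def by auto
        next
          case uC: False
          then show ?thesis using False p'o unfolding in_nodes_def S'_def by auto
        qed
      qed
      then show ?thesis by blast
    qed
    have in_s: "in_nodes Z S' p' s = insert s' (I - C)"
    proof -
      have "u \<in> in_nodes Z S' p' s \<longleftrightarrow> u \<in> insert s' (I - C)" for u
      proof (cases "u = s'")
        case True
        then show ?thesis using p's' unfolding in_nodes_def S'_def by auto
      next
        case False
        show ?thesis
        proof (cases "u \<in> C")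
          case True
          then show ?thesis using p'C s'B assms(3) False unfolding in_nodes_def S'_def by auto
        next
          case uC: False
          then show ?thesis using False p'o unfolding in_nodes_def S'_def I_def by auto
        qed
      qed
      then show ?thesis by blast
    qed
    have in_s': "in_nodes Z S' p' s' = C"
    proof -
      have "u \<in> in_nodes Z S' p' s' \<longleftrightarrow> u \<in> C" for u
      proof (cases "u = s'")
        case True
        then show ?thesis using p's' s'B assms(3) s'C unfolding in_nodes_def S'_def by auto
      next
        case False
        show ?thesis
        proof (cases "u \<in> C")
          case True
          then show ?thesis using p'C CA unfolding in_nodes_def S'_def by auto
        next
          case uC: False
          have "u \<in> Z \<union> S \<Longrightarrow> p u \<noteq> s'" using pA s'B by force
          then show ?thesis using False uC p'o unfolding in_nodes_def S'_def by auto
        qed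
      qed
      then show ?thesis by blast
    qed
    have s'in: "\<And>x. s' \<notin> in_nodes Z S p x" using s'B unfolding in_nodes_def by auto
    have sumo: "(\<Sum>u \<in> in_nodes Z S' p' x. f' u) = (\<Sum>u \<in> in_nodes Z S p x. f u)"
      if "x \<noteq> s" "x \<noteq> s'" "x \<in> Z \<union> S \<union> {zb}" for x
      unfolding in_other[OF that] using s'in[of x] f'o by (intro sum.cong) (auto, metis)
    have sumC: "(\<Sum>u\<in>C. f' u) = FF" unfolding FF_def using s'C f'o by (intro sum.cong refl) metis
    have sum_s: "(\<Sum>u \<in> in_nodes Z S' p' s. f' u) = f s"
    proof -
      have fin: "finite (I - C)" using finI by simp
      have "(\<Sum>u \<in> in_nodes Z S' p' s. f' u) = f' s' + (\<Sum>u \<in> I - C. f' u)"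
        unfolding in_s using s'C s'in[of s] fin unfolding I_def by (subst sum.insert) auto
      also have "(\<Sum>u \<in> I - C. f' u) = (\<Sum>u \<in> I - C. f u)"
        using s'in[of s] f'o unfolding I_def by (intro sum.cong refl f'o) auto
      also have "f' s' + \<dots> = sum f C + (\<Sum>u \<in> I - C. f u)" using f'_def FF_def by simp
      also have "\<dots> = sum f I" using sum.subset_diff[OF C(1) finI, of f] by simp
      also have "\<dots> = f s" using fS assms(3) I_def by simp
      finally show ?thesis .
    qed
    have fq': "is_fqst Z zb S' p' f'"
      unfolding is_fqst_def
    proof (intro conjI)
      show "finite Z" "Z \<noteq> {}" "zb \<notin> Z" by fact+
      show "finite S'" using finS S'_def by simp
      show "S' \<inter> Z = {}" using SZ s'B S'_def by auto
      show "zb \<notin> S'" using zbS s'B S'_def by auto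
      show "\<forall>v\<in>Z \<union> S'. p' v \<in> Z \<union> S' \<union> {zb} \<and> 0 < f' v"
      proof
        fix v assume v: "v \<in> Z \<union> S'"
        show "p' v \<in> Z \<union> S' \<union> {zb} \<and> 0 < f' v"
        proof (cases "v = s'")
          case True then show ?thesis using p's' assms(3) f'_def FFpos S'_def by auto
        next
          case False
          then have vA: "v \<in> Z \<union> S" using v S'_def by auto
          show ?thesis
          proof (cases "v \<in> C")
            case True then show ?thesis using p'C f'o False fpos vA S'_def by auto
          next
            case nC: False then show ?thesis using p'o f'o False fpos vA pA S'_def by auto
          qed
        qed
      qed
      have R: "\<And>v k. (p ^^ k) v = zb \<Longrightarrow> v \<in> (Z \<union> S) \<union> {zb} \<Longrightarrow> \<exists>k'. (p' ^^ k') v = zb"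
        by (rule reach[of "Z \<union> S" p zb C p' s']) (use pA p'o p'C p's' pI C CA in auto)
      show "\<forall>v\<in>Z \<union> S'. \<exists>k. (p' ^^ k) v = zb"
      proof
        fix v assume v: "v \<in> Z \<union> S'"
        show "\<exists>k. (p' ^^ k) v = zb"
        proof (cases "v = s'")
          case True
          obtain k where "(p ^^ k) s = zb" using reachp assms(3) by blast
          then obtain k' where "(p' ^^ k') s = zb" using R assms(3) by blast
          then have "(p' ^^ Suc k') v = zb" using True p's' by (simp add: funpow_Suc_right del: funpow.simps)
          then show ?thesis by blast
        next
          case False
          then have vA: "v \<in> Z \<union> S" using v S'_def by auto
          then obtain k where "(p ^^ k) v = zb" using reachp by blast
          then show ?thesis using R vA by blast
        qed
      qed
      show "\<forall>z\<in>Z. f' z - (\<Sum>u \<in> in_nodes Z S' p' z. f' u) = 1"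
      proof
        fix z assume z: "z \<in> Z"
        have "z \<noteq> s" using z SZ assms(3) by auto
        moreover have "z \<noteq> s'" using z s'B by auto
        ultimately show "f' z - (\<Sum>u \<in> in_nodes Z S' p' z. f' u) = 1"
          using sumo[of z] z fZ f'o by auto
      qed
      show "\<forall>x\<in>S'. f' x = (\<Sum>u \<in> in_nodes Z S' p' x. f' u)"
      proof
        fix x assume x: "x \<in> S'"
        show "f' x = (\<Sum>u \<in> in_nodes Z S' p' x. f' u)"
        proof (cases "x = s'")
          case True then show ?thesis using in_s' sumC f'_def by simp
        next
          case False
          then have xS: "x \<in> S" using x S'_def by auto
          show ?thesis
          proof (cases "x = s")
            case True then show ?thesis using sum_s f'o[of s] s'B assms(3) by auto
          next
            case nS: False then show ?thesis using sumo[of x] xS False fS f'o by auto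
          qed
        qed
      qed
      show "(\<Sum>u \<in> in_nodes Z S' p' zb. f' u) = real (card Z)"
        using sumo[of zb] fzb zbS assms(3) s'B by auto
    qed
    have deg': "\<forall>x\<in>S'. steiner_deg Z S' p' x \<ge> \<phi>"
    proof
      fix x assume x: "x \<in> S'"
      show "steiner_deg Z S' p' x \<ge> \<phi>"
      proof (cases "x = s'")
        case True then show ?thesis using in_s' C assms(2) unfolding steiner_deg_def by simp
      next
        case False
        then have xS: "x \<in> S" using x S'_def by auto
        show ?thesis
        proof (cases "x = s")
          case True
          have "card (insert s' (I - C)) = card (I - C) + 1"
            using finI s'in[of s] I_def by (simp add: card_insert_if)
          moreover have "card (I - C) = card I - card C" using card_Diff_subset[OF finC C(1)] .
          ultimately show ?thesis using True in_s cardI C assms(2) unfolding steiner_deg_def by simp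
        next
          case nS: False
          then show ?thesis using in_other[of x] xS False degS unfolding steiner_deg_def by auto
        qed
      qed
    qed
    have "fqst_cost Z S p f \<le> fqst_cost Z S' p' f'"
      using minc fq' deg' unfolding fqst_deg_bound_def by blast
    moreover have "fqst_cost Z S' p' f' < fqst_cost Z S p f"
    proof -
      have finA: "finite (Z \<union> S)" using finZ finS by simp
      have s'A: "s' \<notin> Z \<union> S" using s'B by auto
      define R where "R = (\<Sum>v \<in> (Z \<union> S) - C. f v * (norm (v - p v))\<^sup>2)"
      have c1: "fqst_cost Z S p f = R + (\<Sum>v\<in>C. f v * (norm (v - s))\<^sup>2)"
      proof -
        have "fqst_cost Z S p f = (\<Sum>v \<in> (Z \<union> S) - C. f v * (norm (v - p v))\<^sup>2) + (\<Sum>v\<in>C. f v * (norm (v - p v))\<^sup>2)"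
          unfolding fqst_cost_def using sum.subset_diff[OF CA finA] by simp
        moreover have "(\<Sum>v\<in>C. f v * (norm (v - p v))\<^sup>2) = (\<Sum>v\<in>C. f v * (norm (v - s))\<^sup>2)"
          by (intro sum.cong refl) (simp add: pC)
        ultimately show ?thesis unfolding R_def by simp
      qed
      have c2: "fqst_cost Z S' p' f' = FF * (norm (s' - s))\<^sup>2 + R + (\<Sum>v\<in>C. f v * (norm (v - s'))\<^sup>2)"
      proof -
        have "fqst_cost Z S' p' f' = f' s' * (norm (s' - p' s'))\<^sup>2 + (\<Sum>v \<in> Z \<union> S. f' v * (norm (v - p' v))\<^sup>2)"
          unfolding fqst_cost_def ZS' using finA s'A by simp
        also have "(\<Sum>v \<in> Z \<union> S. f' v * (norm (v - p' v))\<^sup>2) = (\<Sum>v \<in> (Z \<union> S) - C. f' v * (norm (v - p' v))\<^sup>2) + (\<Sum>v\<in>C. f' v * (norm (v - p' v))\<^sup>2)"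
          using sum.subset_diff[OF CA finA] by simp
        also have "(\<Sum>v \<in> (Z \<union> S) - C. f' v * (norm (v - p' v))\<^sup>2) = R"
          unfolding R_def
        proof (intro sum.cong refl)
          fix x assume x: "x \<in> Z \<union> S - C"
          then have "x \<noteq> s'" using s'A by auto
          then show "f' x * (norm (x - p' x))\<^sup>2 = f x * (norm (x - p x))\<^sup>2"
            using p'o[of x] f'o[of x] x by simp
        qed
        also have "(\<Sum>v\<in>C. f' v * (norm (v - p' v))\<^sup>2) = (\<Sum>v\<in>C. f v * (norm (v - s'))\<^sup>2)"
        proof (intro sum.cong refl)
          fix x assume x: "x \<in> C"
          then have "x \<noteq> s'" using s'C by auto
          then show "f' x * (norm (x - p' x))\<^sup>2 = f x * (norm (x - s'))\<^sup>2"
            using p'C[of x] f'o[of x] x by simp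
        qed
        moreover have "f' s' = FF" by (simp add: f'_def)
        ultimately show ?thesis using p's' by (simp add: add.assoc)
      qed
      have "(\<Sum>v\<in>C. f v * (norm (v - s'))\<^sup>2) = (\<Sum>v\<in>C. f v * (norm (v - s))\<^sup>2 - 2 * t * ((f v *\<^sub>R (s - v)) \<bullet> g) + t\<^sup>2 * f v * (g \<bullet> g))"
        unfolding s'_def by (intro sum.cong refl norm_shift)
      also have "\<dots> = (\<Sum>v\<in>C. f v * (norm (v - s))\<^sup>2) - 2 * t * ((\<Sum>v\<in>C. f v *\<^sub>R (s - v)) \<bullet> g) + t\<^sup>2 * FF * (g \<bullet> g)"
        unfolding FF_def sum.distrib sum_subtractf inner_sum_left sum_distrib_left[symmetric] sum_distrib_right[symmetric]
        by (simp add: mult.assoc)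
      also have "(\<Sum>v\<in>C. f v *\<^sub>R (s - v)) = g" unfolding g_def h_def by simp
      finally have e: "(\<Sum>v\<in>C. f v * (norm (v - s'))\<^sup>2) = (\<Sum>v\<in>C. f v * (norm (v - s))\<^sup>2) - 2 * t * (g \<bullet> g) + t\<^sup>2 * FF * (g \<bullet> g)" .
      have n: "(norm (s' - s))\<^sup>2 = t\<^sup>2 * (g \<bullet> g)"
        unfolding s'_def by (simp add: power_mult_distrib power2_norm_eq_inner)
      have gg: "g \<bullet> g > 0" using gnz by simp
      have "FF * (t\<^sup>2 * (g \<bullet> g)) - 2 * t * (g \<bullet> g) + t\<^sup>2 * FF * (g \<bullet> g) = 2 * t * (g \<bullet> g) * (t * FF - 1)"
        by (simp add: power2_eq_square algebra_simps)
      moreover have "2 * t * (g \<bullet> g) * (t * FF - 1) < 0"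
        using t0 gg tF by (simp add: mult_pos_neg)
      ultimately show ?thesis unfolding c1 c2 e n by linarith
    qed
    ultimately show False by simp
  qed
  ultimately show ?thesis by simp
qed

end
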